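(* Let $T\colon\mathbb R\to\mathbb R$ be nonexpansive with $\operatorname{Fix}T=\varnothing$, let $v:=P_{\overline{\operatorname{ran}}(\mathrm{Id}-T)}0$ and assume $v\in\operatorname{ran}(\mathrm{Id}-T)$. Then: (i) for every $x\in\mathbb R$, the sequence $(T^nx+nv)_{n\in\mathbb N}$ converges; (ii) the map $\mathbb R\to\mathbb R\colon x\mapsto\lim_{n\to\infty}(T^nx+nv)$ is nonexpansive; (iii) if $T$ is firmly nonexpansive, then $x\mapsto\lim_{n\to\infty}(T^nx+nv)$ is firmly nonexpansive.
   Context: $v$ is the element of minimal absolute value of the closure of $\operatorname{ran}(\mathrm{Id}-T)$. A map $T$ is firmly nonexpansive if $\|Tx-Ty\|^2+\|(\mathrm{Id}-T)x-(\mathrm{Id}-T)y\|^2\le\|x-y\|^2$ for all $x,y$. *)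

theory Defs
  imports "HOL-Analysis.Analysis"
begin

definition nonexpansive :: "(real \<Rightarrow> real) \<Rightarrow> bool" where
  "nonexpansive T \<longleftrightarrow> (\<forall>x y. \<bar>T x - T y\<bar> \<le> \<bar>x - y\<bar>)"

definition firmly_nonexpansive :: "(real \<Rightarrow> real) \<Rightarrow> bool" where
  "firmly_nonexpansive T \<longleftrightarrow>
     (\<forall>x y. (T x - T y)\<^sup>2 + ((x - T x) - (y - T y))\<^sup>2 \<le> (x - y)\<^sup>2)"

definition min_disp :: "(real \<Rightarrow> real) \<Rightarrow> real" where
  "min_disp T = closest_point (closure (range (\<lambda>x. x - T x))) 0"

end

theory Submission
  imports Defs
begin

lemma ne_cont: "nonexpansive T \<Longrightarrow> continuous_on S T"
  unfolding continuous_on_iff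
proof (intro ballI allI impI)
  fix x e assume ne: "nonexpansive T" and x: "x \<in> S" and e: "(0::real) < e"
  show "\<exists>d>0. \<forall>x'\<in>S. dist x' x < d \<longrightarrow> dist (T x') (T x) < e"
  proof (intro exI[of _ e] conjI ballI impI)
    fix x' assume "dist x' x < e"
    moreover have "dist (T x') (T x) \<le> dist x' x"
      using ne unfolding nonexpansive_def dist_real_def by blast
    ultimately show "dist (T x') (T x) < e" by linarith
  qed (rule e)
qed

lemma ne_pow: "nonexpansive T \<Longrightarrow> \<bar>(T^^n) x - (T^^n) y\<bar> \<le> \<bar>x - y\<bar>"
  by (induction n) (auto simp: nonexpansive_def intro: order_trans)

lemma sq_iff: "(a::real)^2 + (d - a)^2 \<le> d^2 \<longleftrightarrow> 0 \<le> a*(d-a)"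
proof -
  have "d^2 = a^2 + (d - a)^2 + 2 * (a * (d - a))" by (simp add: power2_eq_square algebra_simps)
  then show ?thesis by linarith
qed

lemma fne_iff: "firmly_nonexpansive f \<longleftrightarrow> (\<forall>x y. 0 \<le> (f x - f y) * ((x - y) - (f x - f y)))"
proof -
  have "((x - f x) - (y - f y)) = (x - y) - (f x - f y)" for x y by simp
  then show ?thesis unfolding firmly_nonexpansive_def using sq_iff by presburger
qed

lemma prod_mono: "(0::real) \<le> a * (d - a) \<Longrightarrow> 0 \<le> d \<Longrightarrow> 0 \<le> a \<and> a \<le> d"
proof (rule ccontr)
  assume h: "0 \<le> a * (d - a)" "0 \<le> d" "\<not> (0 \<le> a \<and> a \<le> d)"
  show False
  proof (cases "a < 0")
    case True
    then have "a * (d - a) < 0" using h(2) by (intro mult_neg_pos) auto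
    then show False using h(1) by linarith
  next
    case False
    then have "d < a" using h(3) by linarith
    then have "a * (d - a) < 0" using h(2) by (intro mult_pos_neg) auto
    then show False using h(1) by linarith
  qed
qed

lemma fne_pow:
  assumes "firmly_nonexpansive T"
  shows "x \<le> y \<Longrightarrow> (T^^n) x \<le> (T^^n) y \<and> (T^^n) y - (T^^n) x \<le> y - x"
proof (induction n)
  case 0 then show ?case by simp
next
  case (Suc n)
  let ?a = "(T^^n) x" and ?b = "(T^^n) y"
  have h: "0 \<le> (T ?b - T ?a) * ((?b - ?a) - (T ?b - T ?a))"
    using assms unfolding fne_iff by blast
  have "0 \<le> T ?b - T ?a \<and> T ?b - T ?a \<le> ?b - ?a"
    using prod_mono[OF h] Suc by simp
  then show ?case using Suc by simp
qed

lemma fne_pow_prod: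
  assumes "firmly_nonexpansive T"
  shows "0 \<le> ((T^^n) x - (T^^n) y) * ((x - y) - ((T^^n) x - (T^^n) y))"
proof (cases "x \<le> y")
  case True
  from fne_pow[OF assms True, of n]
  have "0 \<le> ((T^^n) y - (T^^n) x) * ((y - x) - ((T^^n) y - (T^^n) x))"
    by (intro mult_nonneg_nonneg) auto
  also have "\<dots> = ((T^^n) x - (T^^n) y) * ((x - y) - ((T^^n) x - (T^^n) y))"
    by (simp add: algebra_simps)
  finally show ?thesis .
next
  case False
  from fne_pow[OF assms, of y x n] False
  show ?thesis by (intro mult_nonneg_nonneg) auto
qed

theorem proposition2p6:
  fixes T :: "real \<Rightarrow> real"
  assumes ne: "nonexpansive T"
    and nofix: "{x. T x = x} = {}"
    and vran: "min_disp T \<in> range (\<lambda>x. x - T x)"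
  shows "(\<forall>x. convergent (\<lambda>n. (T ^^ n) x + real n * min_disp T))
    \<and> nonexpansive (\<lambda>x. lim (\<lambda>n. (T ^^ n) x + real n * min_disp T))
    \<and> (firmly_nonexpansive T \<longrightarrow>
         firmly_nonexpansive (\<lambda>x. lim (\<lambda>n. (T ^^ n) x + real n * min_disp T)))"
proof -
  define v where "v = min_disp T"
  define g where "g = (\<lambda>x. x - T x)"
  obtain x0 where x0: "v = g x0" using vran unfolding v_def g_def by auto
  have mono: "g x \<le> g y" if "x \<le> y" for x y
  proof -
    have "\<bar>T y - T x\<bar> \<le> \<bar>y - x\<bar>" using ne unfolding nonexpansive_def by blast
    then have "T y - T x \<le> y - x" using that by (simp add: abs_le_iff)
    then show ?thesis unfolding g_def by linarith
  qed
  have gnz: "g y \<noteq> 0" for y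
  proof -
    have "T y \<noteq> y" using nofix by auto
    then show ?thesis unfolding g_def by simp
  qed
  have vne: "v \<noteq> 0" using x0 gnz by simp
  have gcont: "continuous_on S g" for S
    unfolding g_def by (intro continuous_intros ne_cont[OF ne])
  have absle: "\<bar>v\<bar> \<le> \<bar>g y\<bar>" for y
  proof -
    have "dist 0 (closest_point (closure (range g)) 0) \<le> dist 0 (g y)"
      by (rule closest_point_le) (auto intro: closure_subset[THEN subsetD])
    then show ?thesis unfolding v_def min_disp_def g_def[symmetric] by (simp add: dist_real_def)
  qed
  have vposg: "0 < g y" if vp: "v > 0" for y
  proof (rule ccontr)
    assume "\<not> 0 < g y"
    then have gy: "g y \<le> 0" by simp
    show False
    proof (cases "y \<le> x0")
      case True
      obtain z where "g z = 0"
        using IVT'[of g y 0 x0, OF gy _ True gcont] vp x0 by auto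
      then show False using gnz by blast
    next
      case False
      then have "g x0 \<le> g y" using mono by simp
      then show False using gy vp x0 by simp
    qed
  qed
  have vnegg: "g y < 0" if vn: "v < 0" for y
  proof (rule ccontr)
    assume "\<not> g y < 0"
    then have gy: "0 \<le> g y" by simp
    show False
    proof (cases "x0 \<le> y")
      case True
      obtain z where "g z = 0"
        using IVT'[of g x0 0 y, OF _ gy True gcont] vn x0 by auto
      then show False using gnz by blast
    next
      case False
      then have "g y \<le> g x0" using mono by simp
      then show False using gy vn x0 by simp
    qed
  qed
  have vpos: "v > 0 \<Longrightarrow> g y \<ge> v" for y
    using vposg[of y] absle[of y] by linarith
  have vneg: "v < 0 \<Longrightarrow> g y \<le> v" for y
    using vnegg[of y] absle[of y] by linarith
  have flat: "T z = z - v" if "(v > 0 \<longrightarrow> z \<le> x0) \<and> (v < 0 \<longrightarrow> x0 \<le> z)" for z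
  proof -
    have "g z = v"
    proof (cases "v > 0")
      case True
      then show ?thesis using mono[of z x0] that vpos[of z] x0 by auto
    next
      case False
      then have "v < 0" using vne by simp
      then show ?thesis using mono[of x0 z] that vneg[of z] x0 by auto
    qed
    then show ?thesis unfolding g_def by simp
  qed
  have orbit: "(T^^n) x0 = x0 - real n * v" for n
  proof (induction n)
    case 0 then show ?case by simp
  next
    case (Suc n)
    have "(v > 0 \<longrightarrow> x0 - real n * v \<le> x0) \<and> (v < 0 \<longrightarrow> x0 \<le> x0 - real n * v)"
      by (simp add: mult_nonneg_nonneg mult_nonneg_nonpos)
    then have "T (x0 - real n * v) = x0 - real n * v - v" by (rule flat)
    then have "(T^^Suc n) x0 = x0 - real n * v - v" using Suc.IH by simp
    then show ?case by (simp add: algebra_simps)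
  qed
  define a where "a = (\<lambda>x n. (T ^^ n) x + real n * v)"
  have adiff: "a x n - a y n = (T^^n) x - (T^^n) y" for x y n
    unfolding a_def by simp
  have conv: "convergent (a x)" for x
  proof (rule Bseq_monoseq_convergent)
    show "Bseq (a x)"
    proof (rule BseqI')
      fix n
      have "\<bar>a x n - a x0 n\<bar> \<le> \<bar>x - x0\<bar>" using adiff ne_pow[OF ne] by simp
      moreover have "a x0 n = x0" unfolding a_def orbit by simp
      ultimately show "norm (a x n) \<le> \<bar>x0\<bar> + \<bar>x - x0\<bar>" by simp
    qed
    have step: "a x (Suc n) - a x n = v - g ((T^^n) x)" for n
      unfolding a_def g_def by (simp add: algebra_simps)
    show "monoseq (a x)"
      unfolding monoseq_Suc
    proof (cases "v > 0")
      case True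
      then show "(\<forall>n. a x n \<le> a x (Suc n)) \<or> (\<forall>n. a x (Suc n) \<le> a x n)"
      proof -
        have "a x (Suc n) \<le> a x n" for n
          using step[of n] vpos[OF True, of "(T^^n) x"] by linarith
        then show ?thesis by blast
      qed
    next
      case False
      then have "v < 0" using vne by simp
      then show "(\<forall>n. a x n \<le> a x (Suc n)) \<or> (\<forall>n. a x (Suc n) \<le> a x n)"
      proof -
        have "a x n \<le> a x (Suc n)" for n
          using step[of n] vneg[OF \<open>v < 0\<close>, of "(T^^n) x"] by linarith
        then show ?thesis by blast
      qed
    qed
  qed
  define L where "L = (\<lambda>x. lim (a x))"
  have lim: "a x \<longlonglongrightarrow> L x" for x
    using conv convergent_LIMSEQ_iff unfolding L_def by blast
  have nL: "nonexpansive L"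
    unfolding nonexpansive_def
  proof (intro allI)
    fix x y
    have "(\<lambda>n. \<bar>a x n - a y n\<bar>) \<longlonglongrightarrow> \<bar>L x - L y\<bar>"
      by (intro tendsto_intros lim)
    then show "\<bar>L x - L y\<bar> \<le> \<bar>x - y\<bar>"
      by (rule LIMSEQ_le_const2) (use adiff ne_pow[OF ne] in auto)
  qed
  have fL: "firmly_nonexpansive L" if fT: "firmly_nonexpansive T"
    unfolding fne_iff
  proof (intro allI)
    fix x y
    have "(\<lambda>n. (a x n - a y n) * ((x - y) - (a x n - a y n)))
        \<longlonglongrightarrow> (L x - L y) * ((x - y) - (L x - L y))"
      by (intro tendsto_intros lim)
    then show "0 \<le> (L x - L y) * ((x - y) - (L x - L y))"
      by (rule LIMSEQ_le_const) (use adiff fne_pow_prod[OF fT] in auto)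
  qed
  show ?thesis
    unfolding v_def[symmetric] using conv nL fL unfolding L_def a_def by blast
qed

end
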